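(* There is an absolute constant $C\ge0$ such that the following holds. Under the assumptions of the context, if the non-monotone Frank-Wolfe procedure is run with step size $\gamma=1/K$ for a positive integer $K$ (so that it performs exactly $K$ iterations), then its output satisfies $$f(x^{(K)})\ge e^{-1}f(x^* )-\frac{LD^2}{2K}-\frac{C}{K^2}f(x^* ).$$
   Context: $\bar u\in\mathbb{R}^n_{>0}$; $f:[0,\bar u]\to\mathbb{R}$ is differentiable, nonnegative, DR-submodular (for all $a\le b$ in the domain, $i\in[n]$, $k\ge0$ with $a+ke_i,b+ke_i$ in the domain, $f(a+ke_i)-f(a)\ge f(b+ke_i)-f(b)$) with $L$-Lipschitz gradient; $\mathcal{P}\subseteq[0,\bar u]$ is nonempty, compact, convex, down-closed ($x\in\mathcal{P}$, $0\le y\le x$ imply $y\in\mathcal{P}$) with diameter $D=\max_{x,y\in\mathcal{P}}\|x-y\|$; $x^*\in\arg\max_{x\in\mathcal{P}}f(x)$. Non-monotone Frank-Wolfe with step size $\gamma$: $x^{(0)}=0$, $t^{(0)}=0$; while $t^{(k)}<1$: choose $v^{(k)}\in\arg\max\{\langle v,\nabla f(x^{(k)})\rangle: v\in\mathcal{P},\ v\le\bar u-x^{(k)}\}$, $\gamma_k=\min\{\gamma,1-t^{(k)}\}$, $x^{(k+1)}=x^{(k)}+\gamma_k v^{(k)}$, $t^{(k+1)}=t^{(k)}+\gamma_k$. *)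

theory Defs
  imports "HOL-Analysis.Analysis"
begin

text \<open>Vectors of R^n are represented as functions nat => real whose coordinates
  with index >= n vanish; all operations are written out coordinatewise.
  This lets the dimension n be an ordinary variable, so that the constant C
  in the theorem can be chosen independently of n.\<close>

definition inner_n :: "nat \<Rightarrow> (nat \<Rightarrow> real) \<Rightarrow> (nat \<Rightarrow> real) \<Rightarrow> real" where
  "inner_n n x y = (\<Sum>i<n. x i * y i)"

definition dist_n :: "nat \<Rightarrow> (nat \<Rightarrow> real) \<Rightarrow> (nat \<Rightarrow> real) \<Rightarrow> real" where
  "dist_n n x y = L2_set (\<lambda>i. x i - y i) {..<n}"

definition box_n :: "nat \<Rightarrow> (nat \<Rightarrow> real) \<Rightarrow> (nat \<Rightarrow> real) set" where
  "box_n n u = {x. (\<forall>i<n. 0 \<le> x i \<and> x i \<le> u i) \<and> (\<forall>i\<ge>n. x i = 0)}"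

definition has_gradient_on :: "nat \<Rightarrow> ((nat \<Rightarrow> real) \<Rightarrow> real) \<Rightarrow> ((nat \<Rightarrow> real) \<Rightarrow> (nat \<Rightarrow> real))
    \<Rightarrow> (nat \<Rightarrow> real) set \<Rightarrow> bool" where
  "has_gradient_on n f g S \<longleftrightarrow>
     (\<forall>x\<in>S. (\<forall>i\<ge>n. g x i = 0) \<and>
        (\<forall>\<epsilon>>0. \<exists>\<delta>>0. \<forall>y\<in>S. dist_n n y x < \<delta> \<longrightarrow>
            \<bar>f y - f x - inner_n n (g x) (\<lambda>i. y i - x i)\<bar> \<le> \<epsilon> * dist_n n y x))"

definition lipschitz_grad :: "nat \<Rightarrow> ((nat \<Rightarrow> real) \<Rightarrow> (nat \<Rightarrow> real)) \<Rightarrow> (nat \<Rightarrow> real) set \<Rightarrow> real \<Rightarrow> bool" where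
  "lipschitz_grad n g S L \<longleftrightarrow> (\<forall>x\<in>S. \<forall>y\<in>S. dist_n n (g x) (g y) \<le> L * dist_n n x y)"

definition dr_submodular :: "nat \<Rightarrow> (nat \<Rightarrow> real) \<Rightarrow> ((nat \<Rightarrow> real) \<Rightarrow> real) \<Rightarrow> bool" where
  "dr_submodular n u f \<longleftrightarrow>
     (\<forall>a\<in>box_n n u. \<forall>b\<in>box_n n u. \<forall>i<n. \<forall>k::real.
        (\<forall>j<n. a j \<le> b j) \<and> k \<ge> 0 \<and> a(i := a i + k) \<in> box_n n u \<and> b(i := b i + k) \<in> box_n n u
        \<longrightarrow> f (a(i := a i + k)) - f a \<ge> f (b(i := b i + k)) - f b)"

definition convex_n :: "(nat \<Rightarrow> real) set \<Rightarrow> bool" where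
  "convex_n P \<longleftrightarrow> (\<forall>x\<in>P. \<forall>y\<in>P. \<forall>\<theta>::real. 0 \<le> \<theta> \<and> \<theta> \<le> 1 \<longrightarrow>
      (\<lambda>i. \<theta> * x i + (1 - \<theta>) * y i) \<in> P)"

definition down_closed_n :: "nat \<Rightarrow> (nat \<Rightarrow> real) set \<Rightarrow> bool" where
  "down_closed_n n P \<longleftrightarrow> (\<forall>x\<in>P. \<forall>y. (\<forall>i<n. 0 \<le> y i \<and> y i \<le> x i) \<and> (\<forall>i\<ge>n. y i = 0) \<longrightarrow> y \<in> P)"

definition diam_n :: "nat \<Rightarrow> (nat \<Rightarrow> real) set \<Rightarrow> real" where
  "diam_n n P = (SUP x\<in>P. SUP y\<in>P. dist_n n x y)"

text \<open>A run of non-monotone Frank-Wolfe with step size gamma: x, t are the iterates,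
  v the chosen linear-maximization solutions (any maximizer may be chosen).
  While t k < 1 the update is performed.\<close>
definition nmfw_run :: "nat \<Rightarrow> (nat \<Rightarrow> real) \<Rightarrow> ((nat \<Rightarrow> real) \<Rightarrow> (nat \<Rightarrow> real)) \<Rightarrow> (nat \<Rightarrow> real) set
    \<Rightarrow> real \<Rightarrow> (nat \<Rightarrow> nat \<Rightarrow> real) \<Rightarrow> (nat \<Rightarrow> real) \<Rightarrow> (nat \<Rightarrow> nat \<Rightarrow> real) \<Rightarrow> bool" where
  "nmfw_run n u g P \<gamma> x t v \<longleftrightarrow>
     x 0 = (\<lambda>i. 0) \<and> t 0 = 0 \<and>
     (\<forall>k. t k < 1 \<longrightarrow>
        (v k \<in> P \<and> (\<forall>i<n. v k i \<le> u i - x k i) \<and>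
         (\<forall>w\<in>P. (\<forall>i<n. w i \<le> u i - x k i) \<longrightarrow> inner_n n w (g (x k)) \<le> inner_n n (v k) (g (x k)))) \<and>
        x (Suc k) = (\<lambda>i. x k i + min \<gamma> (1 - t k) * v k i) \<and>
        t (Suc k) = t k + min \<gamma> (1 - t k))"

end

theory Submission
  imports Defs
begin

lemma L2_scale: "L2_set (\<lambda>i. c * h i) A = \<bar>c\<bar> * L2_set h A"
  unfolding L2_set_def by (simp add: power_mult_distrib sum_distrib_left[symmetric] real_sqrt_mult)

lemma inner_n_sym: "inner_n n a b = inner_n n b a"
  unfolding inner_n_def by (simp add: mult.commute)

lemma inner_n_scale: "inner_n n a (\<lambda>i. c * b i) = c * inner_n n a b"
  unfolding inner_n_def by (simp add: sum_distrib_left algebra_simps)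

lemma inner_n_diff: "inner_n n (\<lambda>i. a i - b i) c = inner_n n a c - inner_n n b c"
  unfolding inner_n_def by (simp add: sum_subtractf algebra_simps)

lemma inner_n_CS: "inner_n n a b \<ge> - (L2_set a {..<n} * L2_set b {..<n})"
proof -
  have "(\<Sum>i<n. \<bar>a i\<bar> * \<bar>b i\<bar>) \<le> L2_set a {..<n} * L2_set b {..<n}" by (rule L2_set_mult_ineq)
  moreover have "- (\<Sum>i<n. \<bar>a i\<bar> * \<bar>b i\<bar>) \<le> inner_n n a b"
    unfolding inner_n_def sum_negf[symmetric]
    by (intro sum_mono) (metis abs_ge_minus_self abs_mult minus_le_iff)
  ultimately show ?thesis by linarith
qed

lemma box_convex:
  assumes "x \<in> box_n n u" "y \<in> box_n n u" "0 \<le> s" "s \<le> 1"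
  shows "(\<lambda>i. x i + s * (y i - x i)) \<in> box_n n u"
proof -
  have "\<forall>i<n. 0 \<le> x i + s * (y i - x i) \<and> x i + s * (y i - x i) \<le> u i"
  proof (intro allI impI)
    fix i assume "i < n"
    then have h: "0 \<le> x i" "x i \<le> u i" "0 \<le> y i" "y i \<le> u i" using assms unfolding box_n_def by auto
    have "x i + s * (y i - x i) = (1 - s) * x i + s * y i" by algebra
    moreover have "0 \<le> (1 - s) * x i + s * y i" using h assms by simp
    moreover have "(1 - s) * x i + s * y i \<le> (1 - s) * u i + s * u i"
      using h assms by (intro add_mono mult_left_mono) auto
    ultimately show "0 \<le> x i + s * (y i - x i) \<and> x i + s * (y i - x i) \<le> u i" by (simp add: algebra_simps)
  qed
  then show ?thesis using assms unfolding box_n_def by auto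
qed



lemma phi_deriv:
  assumes G: "has_gradient_on n f g (box_n n u)"
    and x: "x \<in> box_n n u" and y: "y \<in> box_n n u" and s: "s \<in> {0..1}"
  shows "((\<lambda>s. f (\<lambda>i. x i + s * (y i - x i))) has_real_derivative
           inner_n n (g (\<lambda>i. x i + s * (y i - x i))) (\<lambda>i. y i - x i)) (at s within {0..1})"
proof -
  define p where "p = (\<lambda>s::real. (\<lambda>i. x i + s * (y i - x i)))"
  define N where "N = L2_set (\<lambda>i. y i - x i) {..<n}"
  have N0: "N \<ge> 0" unfolding N_def by (rule L2_set_nonneg)
  have pbox: "p r \<in> box_n n u" if "r \<in> {0..1}" for r
    unfolding p_def using box_convex[OF x y] that by auto
  have dp: "dist_n n (p r) (p s) = \<bar>r - s\<bar> * N" for r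
  proof -
    have "(\<lambda>i. p r i - p s i) = (\<lambda>i. (r - s) * (y i - x i))" unfolding p_def by (auto simp: algebra_simps)
    then show ?thesis unfolding dist_n_def N_def by (simp add: L2_scale)
  qed
  have ip: "inner_n n (g (p s)) (\<lambda>i. p r i - p s i) = (r - s) * inner_n n (g (p s)) (\<lambda>i. y i - x i)" for r
  proof -
    have "(\<lambda>i. p r i - p s i) = (\<lambda>i. (r - s) * (y i - x i))" unfolding p_def by (auto simp: algebra_simps)
    then show ?thesis by (simp add: inner_n_scale)
  qed
  define D where "D = inner_n n (g (p s)) (\<lambda>i. y i - x i)"
  have "((\<lambda>r. (f (p r) - f (p s)) / (r - s)) \<longlongrightarrow> D) (at s within {0..1})"
  proof (rule tendstoI)
    fix e :: real assume e: "e > 0"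
    define \<epsilon> where "\<epsilon> = e / (2 * (N + 1))"
    have \<epsilon>0: "\<epsilon> > 0" using e N0 unfolding \<epsilon>_def by simp
    obtain \<delta> where \<delta>: "\<delta> > 0" and H: "\<And>z. z \<in> box_n n u \<Longrightarrow> dist_n n z (p s) < \<delta> \<Longrightarrow>
        \<bar>f z - f (p s) - inner_n n (g (p s)) (\<lambda>i. z i - p s i)\<bar> \<le> \<epsilon> * dist_n n z (p s)"
      using G pbox[OF s] \<epsilon>0 unfolding has_gradient_on_def by meson
    show "\<forall>\<^sub>F r in at s within {0..1}. dist ((f (p r) - f (p s)) / (r - s)) D < e"
      unfolding eventually_at
    proof (intro exI[of _ "\<delta> / (N + 1)"] conjI ballI impI)
      show "\<delta> / (N + 1) > 0" using \<delta> N0 by simp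
      fix r assume r: "r \<in> {0..1}" and rr: "r \<noteq> s \<and> dist r s < \<delta> / (N + 1)"
      have rs: "\<bar>r - s\<bar> > 0" using rr by simp
      have "\<bar>r - s\<bar> * N < \<delta>"
      proof -
        have "\<bar>r - s\<bar> * N \<le> \<bar>r - s\<bar> * (N + 1)" using rs by simp
        also have "\<dots> < \<delta>" using rr N0 by (simp add: dist_real_def field_simps)
        finally show ?thesis .
      qed
      then have "\<bar>f (p r) - f (p s) - (r - s) * D\<bar> \<le> \<epsilon> * (\<bar>r - s\<bar> * N)"
        using H[OF pbox[OF r]] by (simp add: dp ip D_def)
      then have "\<bar>(f (p r) - f (p s) - (r - s) * D) / (r - s)\<bar> \<le> \<epsilon> * N"
        using rs by (simp add: abs_divide divide_le_eq mult.commute mult.left_commute)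
      moreover have "(f (p r) - f (p s) - (r - s) * D) / (r - s) = (f (p r) - f (p s)) / (r - s) - D"
        using rs by (simp add: field_simps)
      moreover have "\<epsilon> * N < e"
      proof -
        have "\<epsilon> * N = e * N / (2 * (N + 1))" unfolding \<epsilon>_def by simp
        also have "\<dots> < e" using e N0 by (simp add: field_simps add_nonneg_pos)
        finally show ?thesis .
      qed
      ultimately show "dist ((f (p r) - f (p s)) / (r - s)) D < e" by (simp add: dist_real_def)
    qed
  qed
  then show ?thesis unfolding has_field_derivative_iff p_def D_def .
qed



lemma descent:
  assumes G: "has_gradient_on n f g (box_n n u)" and Lg: "lipschitz_grad n g (box_n n u) L"
    and x: "x \<in> box_n n u" and y: "y \<in> box_n n u"
  shows "f y \<ge> f x + inner_n n (g x) (\<lambda>i. y i - x i) - L / 2 * (L2_set (\<lambda>i. y i - x i) {..<n})\<^sup>2"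
proof -
  define p where "p = (\<lambda>s::real. (\<lambda>i. x i + s * (y i - x i)))"
  define N where "N = L2_set (\<lambda>i. y i - x i) {..<n}"
  define D0 where "D0 = inner_n n (g x) (\<lambda>i. y i - x i)"
  have N0: "N \<ge> 0" unfolding N_def by (rule L2_set_nonneg)
  have p0: "p 0 = x" and p1: "p 1 = y" unfolding p_def by auto
  have pbox: "p r \<in> box_n n u" if "r \<in> {0..1}" for r
    unfolding p_def using box_convex[OF x y] that by auto
  define \<psi> where "\<psi> = (\<lambda>s. f (p s) - s * D0 + L / 2 * s\<^sup>2 * N\<^sup>2)"
  have der: "(\<psi> has_real_derivative (inner_n n (g (p s)) (\<lambda>i. y i - x i) - D0 + L * s * N\<^sup>2)) (at s within {0..1})"
    if s: "s \<in> {0..1}" for s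
  proof -
    have d1: "((\<lambda>s. f (p s)) has_real_derivative inner_n n (g (p s)) (\<lambda>i. y i - x i)) (at s within {0..1})"
      using phi_deriv[OF G x y s] unfolding p_def .
    show ?thesis unfolding \<psi>_def
      by (rule derivative_eq_intros d1 refl | simp)+
  qed
  have nonneg: "inner_n n (g (p s)) (\<lambda>i. y i - x i) - D0 + L * s * N\<^sup>2 \<ge> 0" if s: "s \<in> {0..1}" for s
  proof -
    have "inner_n n (g (p s)) (\<lambda>i. y i - x i) - D0 = inner_n n (\<lambda>i. g (p s) i - g x i) (\<lambda>i. y i - x i)"
      unfolding D0_def inner_n_diff by simp
    also have "\<dots> \<ge> - (dist_n n (g (p s)) (g x) * N)"
      using inner_n_CS unfolding dist_n_def N_def by blast
    finally have a: "inner_n n (g (p s)) (\<lambda>i. y i - x i) - D0 \<ge> - (dist_n n (g (p s)) (g x) * N)" .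
    have "dist_n n (g (p s)) (g x) \<le> L * dist_n n (p s) x"
      using Lg pbox[OF s] x unfolding lipschitz_grad_def by blast
    moreover have "dist_n n (p s) x = s * N"
    proof -
      have "(\<lambda>i. p s i - x i) = (\<lambda>i. s * (y i - x i))" unfolding p_def by auto
      then show ?thesis using s unfolding dist_n_def N_def by (simp add: L2_scale)
    qed
    ultimately have "dist_n n (g (p s)) (g x) * N \<le> L * s * N * N" using N0
      by (metis mult.assoc mult_right_mono)
    with a show ?thesis by (simp add: power2_eq_square mult.assoc)
  qed
  have c: "continuous_on {0..1} \<psi>" by (rule DERIV_continuous_on, rule der)
  have e: "\<exists>y. DERIV \<psi> s :> y \<and> y \<ge> 0" if "0 < s" "s < 1" for s
    using der[of s] nonneg[of s] at_within_Icc_at[of 0 s 1] that by auto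
  have "\<psi> 0 \<le> \<psi> 1" using DERIV_nonneg_imp_increasing_open[of 0 1 \<psi>] c e by auto
  then show ?thesis unfolding \<psi>_def p0 p1 D0_def N_def by simp
qed



lemma dr_multi:
  assumes DR: "dr_submodular n u f" and a: "a \<in> box_n n u" and b: "b \<in> box_n n u"
    and ab: "\<forall>i<n. a i \<le> b i" and c: "\<forall>i<n. c i \<ge> 0"
    and ac: "(\<lambda>i. a i + c i) \<in> box_n n u" and bc: "(\<lambda>i. b i + c i) \<in> box_n n u"
  shows "f (\<lambda>i. a i + c i) - f a \<ge> f (\<lambda>i. b i + c i) - f b"
proof -
  define cj where "cj = (\<lambda>j i. if i < j then c i else (0::real))"
  have cn: "c i = 0" if "i \<ge> n" for i using a ac that unfolding box_n_def by auto
  have main: "f (\<lambda>i. a i + cj j i) - f a \<ge> f (\<lambda>i. b i + cj j i) - f b" if "j \<le> n" for j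
    using that
  proof (induction j)
    case 0
    then show ?case by (simp add: cj_def)
  next
    case (Suc j)
    define A where "A = (\<lambda>i. a i + cj j i)"
    define B where "B = (\<lambda>i. b i + cj j i)"
    have jn: "j < n" using Suc by simp
    have Abox: "A \<in> box_n n u" using a ac c jn unfolding A_def cj_def box_n_def by force
    have Bbox: "B \<in> box_n n u" using b bc c jn unfolding B_def cj_def box_n_def by force
    have AB: "\<forall>i<n. A i \<le> B i" using ab unfolding A_def B_def by simp
    have A': "A(j := A j + c j) = (\<lambda>i. a i + cj (Suc j) i)" unfolding A_def cj_def by auto
    have B': "B(j := B j + c j) = (\<lambda>i. b i + cj (Suc j) i)" unfolding B_def cj_def by auto
    have A'box: "A(j := A j + c j) \<in> box_n n u" unfolding A' using a ac c jn unfolding cj_def box_n_def by force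
    have B'box: "B(j := B j + c j) \<in> box_n n u" unfolding B' using b bc c jn unfolding cj_def box_n_def by force
    have "f (A(j := A j + c j)) - f A \<ge> f (B(j := B j + c j)) - f B"
      using DR Abox Bbox AB A'box B'box jn c unfolding dr_submodular_def by blast
    then have "f (\<lambda>i. a i + cj (Suc j) i) - f A \<ge> f (\<lambda>i. b i + cj (Suc j) i) - f B"
      unfolding A' B' .
    moreover have "f A - f a \<ge> f B - f b" using Suc.IH jn unfolding A_def B_def by simp
    ultimately show ?case by linarith
  qed
  have "cj n = c" unfolding cj_def using cn by (auto simp: fun_eq_iff)
  with main[of n] show ?thesis by simp
qed



lemma tele:
  assumes DR: "dr_submodular n u f" and x: "x \<in> box_n n u" and z: "z \<in> box_n n u"
    and xz: "\<forall>i<n. x i \<le> z i" and m: "m > (0::nat)"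
  defines "q \<equiv> (\<lambda>s::real. (\<lambda>i. x i + s * (z i - x i)))"
  shows "f z - f x \<le> real m * (f (q (1 / real m)) - f x)"
    and "f z - f x \<ge> real m * (f z - f (q (real (m - 1) / real m)))"
proof -
  define c where "c = (\<lambda>i. (z i - x i) / real m)"
  have qbox: "q (real j / real m) \<in> box_n n u" if "j \<le> m" for j
    unfolding q_def using box_convex[OF x z, of "real j / real m"] that m by auto
  have qstep: "(\<lambda>i. q (real j / real m) i + c i) = q (real (Suc j) / real m)" for j
    unfolding q_def c_def by (auto simp: fun_eq_iff add_divide_distrib field_simps)
  have c0: "\<forall>i<n. c i \<ge> 0" using xz unfolding c_def by simp
  have q0: "q (real 0 / real m) = x" and qm: "q (real m / real m) = z" using m unfolding q_def by auto
  have qmono: "\<forall>i<n. q (real j / real m) i \<le> q (real k / real m) i" if "j \<le> k" for j k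
  proof (intro allI impI)
    fix i assume "i < n"
    then have "z i - x i \<ge> 0" using xz by simp
    moreover have "real j / real m \<le> real k / real m" using that by (simp add: divide_right_mono)
    ultimately have "real j / real m * (z i - x i) \<le> real k / real m * (z i - x i)"
      by (rule mult_right_mono[rotated])
    then show "q (real j / real m) i \<le> q (real k / real m) i" unfolding q_def
      by simp
  qed
  have tel: "(\<Sum>j<m. f (q (real (Suc j) / real m)) - f (q (real j / real m))) = f z - f x"
    using sum_lessThan_telescope[of "\<lambda>j. f (q (real j / real m))" m] q0 qm by simp
  have up: "f (q (real (Suc j) / real m)) - f (q (real j / real m)) \<le> f (q (1 / real m)) - f x"
    if "j \<in> {..<m}" for j
  proof -
    have A: "f (\<lambda>i. q (real 0 / real m) i + c i) - f (q (real 0 / real m)) \<ge>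
          f (\<lambda>i. q (real j / real m) i + c i) - f (q (real j / real m))"
      using dr_multi[OF DR qbox[of 0] qbox[of j] qmono[of 0 j] c0] that qbox[of 1] qbox[of "Suc j"]
      unfolding qstep by simp
    show ?thesis using A unfolding qstep unfolding q0 by simp
  qed
  have lo: "f (q (real (Suc j) / real m)) - f (q (real j / real m)) \<ge> f z - f (q (real (m - 1) / real m))"
    if "j \<in> {..<m}" for j
  proof -
    have B: "f (\<lambda>i. q (real j / real m) i + c i) - f (q (real j / real m)) \<ge>
          f (\<lambda>i. q (real (m - 1) / real m) i + c i) - f (q (real (m - 1) / real m))"
      using dr_multi[OF DR qbox[of j] qbox[of "m - 1"] qmono[of j "m - 1"] c0] that qbox[of "Suc j"] qbox[of "Suc (m - 1)"]
      unfolding qstep by simp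
    have "Suc (m - 1) = m" using m by simp
    then show ?thesis using B qm unfolding qstep by simp
  qed
  show "f z - f x \<le> real m * (f (q (1 / real m)) - f x)"
  proof -
    have "(\<Sum>j<m. f (q (real (Suc j) / real m)) - f (q (real j / real m))) \<le> of_nat (card {..<m}) * (f (q (1 / real m)) - f x)"
      by (rule sum_bounded_above) (rule up)
    then show ?thesis using tel by simp
  qed
  show "f z - f x \<ge> real m * (f z - f (q (real (m - 1) / real m)))"
  proof -
    have "(\<Sum>j<m. f (q (real (Suc j) / real m)) - f (q (real j / real m))) \<ge> of_nat (card {..<m}) * (f z - f (q (real (m - 1) / real m)))"
      by (rule sum_bounded_below) (rule lo)
    then show ?thesis using tel by simp
  qed
qed



lemma grad_bounds:
  assumes DR: "dr_submodular n u f" and G: "has_gradient_on n f g (box_n n u)"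
    and x: "x \<in> box_n n u" and z: "z \<in> box_n n u" and xz: "\<forall>i<n. x i \<le> z i"
  shows "f z - f x \<le> inner_n n (g x) (\<lambda>i. z i - x i)"
    and "f z - f x \<ge> inner_n n (g z) (\<lambda>i. z i - x i)"
proof -
  define q where "q = (\<lambda>s::real. (\<lambda>i. x i + s * (z i - x i)))"
  define N where "N = L2_set (\<lambda>i. z i - x i) {..<n}"
  have N0: "N \<ge> 0" unfolding N_def by (rule L2_set_nonneg)
  have qbox: "q s \<in> box_n n u" if "0 \<le> s" "s \<le> 1" for s
    unfolding q_def using box_convex[OF x z] that by auto
  have dq: "(\<lambda>i. q s i - q r i) = (\<lambda>i. (s - r) * (z i - x i))" for s r
    unfolding q_def by (auto simp: algebra_simps)
  have q0: "q 0 = x" and q1: "q 1 = z" unfolding q_def by auto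
  have key: "\<exists>m::nat. m > 0 \<and> real m * \<delta> > N" if "\<delta> > 0" for \<delta>
  proof -
    obtain m :: nat where m: "N / \<delta> < real m" using reals_Archimedean2 by blast
    have "0 \<le> N / \<delta>" using N0 that by simp
    then have "m > 0" using m by linarith
    moreover have "N < real m * \<delta>" using m that by (simp add: divide_less_eq)
    ultimately show ?thesis by blast
  qed
  show "f z - f x \<le> inner_n n (g x) (\<lambda>i. z i - x i)"
  proof (rule field_le_epsilon)
    fix e :: real assume e: "e > 0"
    define \<epsilon> where "\<epsilon> = e / (N + 1)"
    have \<epsilon>0: "\<epsilon> > 0" using e N0 unfolding \<epsilon>_def by simp
    obtain \<delta> where \<delta>: "\<delta> > 0" and H: "\<And>y. y \<in> box_n n u \<Longrightarrow> dist_n n y x < \<delta> \<Longrightarrow>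
        \<bar>f y - f x - inner_n n (g x) (\<lambda>i. y i - x i)\<bar> \<le> \<epsilon> * dist_n n y x"
      using G x \<epsilon>0 unfolding has_gradient_on_def by meson
    obtain m :: nat where m: "m > 0" "real m * \<delta> > N" using key[OF \<delta>] by blast
    have mpos: "real m > 0" using m by simp
    have tl: "f z - f x \<le> real m * (f (q (1 / real m)) - f x)"
      using tele(1)[OF DR x z xz m(1)] unfolding q_def .
    have "dist_n n (q (1 / real m)) (q 0) = \<bar>1 / real m - 0\<bar> * N"
      unfolding dist_n_def dq N_def by (rule L2_scale)
    then have dist: "dist_n n (q (1 / real m)) x = N / real m" using mpos unfolding q0 by simp
    have "dist_n n (q (1 / real m)) x < \<delta>" unfolding dist using m mpos by (simp add: divide_less_eq mult.commute)
    then have "\<bar>f (q (1 / real m)) - f x - inner_n n (g x) (\<lambda>i. q (1 / real m) i - x i)\<bar> \<le> \<epsilon> * (N / real m)"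
    proof -
      have "1 / real m \<le> 1" using m by simp
      then show ?thesis using H[OF qbox[of "1 / real m"]] \<open>dist_n n (q (1 / real m)) x < \<delta>\<close> unfolding dist by simp
    qed
    moreover have "inner_n n (g x) (\<lambda>i. q (1 / real m) i - q 0 i) = (1 / real m - 0) * inner_n n (g x) (\<lambda>i. z i - x i)"
      unfolding dq by (rule inner_n_scale)
    then have "inner_n n (g x) (\<lambda>i. q (1 / real m) i - x i) = inner_n n (g x) (\<lambda>i. z i - x i) / real m"
      unfolding q0 by simp
    ultimately have "f (q (1 / real m)) - f x \<le> inner_n n (g x) (\<lambda>i. z i - x i) / real m + \<epsilon> * N / real m"
      by simp
    then have "real m * (f (q (1 / real m)) - f x) \<le> inner_n n (g x) (\<lambda>i. z i - x i) + \<epsilon> * N"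
      using mpos by (simp add: field_simps)
    moreover have "\<epsilon> * N \<le> e"
      unfolding \<epsilon>_def using e N0 by (simp add: field_simps)
    ultimately show "f z - f x \<le> inner_n n (g x) (\<lambda>i. z i - x i) + e" using tl by linarith
  qed
  have "- (f z - f x) \<le> - inner_n n (g z) (\<lambda>i. z i - x i)"
  proof (rule field_le_epsilon)
    fix e :: real assume e: "e > 0"
    define \<epsilon> where "\<epsilon> = e / (N + 1)"
    have \<epsilon>0: "\<epsilon> > 0" using e N0 unfolding \<epsilon>_def by simp
    obtain \<delta> where \<delta>: "\<delta> > 0" and H: "\<And>y. y \<in> box_n n u \<Longrightarrow> dist_n n y z < \<delta> \<Longrightarrow>
        \<bar>f y - f z - inner_n n (g z) (\<lambda>i. y i - z i)\<bar> \<le> \<epsilon> * dist_n n y z"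
      using G z \<epsilon>0 unfolding has_gradient_on_def by meson
    obtain m :: nat where m: "m > 0" "real m * \<delta> > N" using key[OF \<delta>] by blast
    have mpos: "real m > 0" using m by simp
    define y where "y = q (real (m - 1) / real m)"
    have tl: "f z - f x \<ge> real m * (f z - f y)"
      using tele(2)[OF DR x z xz m(1)] unfolding q_def y_def .
    have rm: "real (m - 1) / real m - 1 = - (1 / real m)" using m mpos by (simp add: of_nat_diff field_simps)
    have dy: "(\<lambda>i. y i - z i) = (\<lambda>i. (- (1 / real m)) * (z i - x i))"
      using dq[of "real (m - 1) / real m" 1] unfolding q1 y_def rm .
    have "dist_n n y z = \<bar>- (1 / real m)\<bar> * N"
      unfolding dist_n_def dy N_def by (rule L2_scale)
    then have dist: "dist_n n y z = N / real m" by simp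
    have ybox: "y \<in> box_n n u" unfolding y_def using m by (intro qbox) auto
    have "dist_n n y z < \<delta>" unfolding dist using m mpos by (simp add: divide_less_eq mult.commute)
    then have "\<bar>f y - f z - inner_n n (g z) (\<lambda>i. y i - z i)\<bar> \<le> \<epsilon> * (N / real m)"
      using H[OF ybox] unfolding dist by simp
    moreover have "inner_n n (g z) (\<lambda>i. y i - z i) = - (inner_n n (g z) (\<lambda>i. z i - x i) / real m)"
      unfolding dy inner_n_scale by simp
    ultimately have "f z - f y \<ge> inner_n n (g z) (\<lambda>i. z i - x i) / real m - \<epsilon> * N / real m"
      by simp
    then have "real m * (f z - f y) \<ge> inner_n n (g z) (\<lambda>i. z i - x i) - \<epsilon> * N"
      using mpos by (simp add: field_simps)
    moreover have "\<epsilon> * N \<le> e"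
      unfolding \<epsilon>_def using e N0 by (simp add: field_simps)
    ultimately show "- (f z - f x) \<le> - inner_n n (g z) (\<lambda>i. z i - x i) + e" using tl by linarith
  qed
  then show "f z - f x \<ge> inner_n n (g z) (\<lambda>i. z i - x i)" by simp
qed



lemma join_bound:
  assumes DR: "dr_submodular n u f" and G: "has_gradient_on n f g (box_n n u)"
    and x: "x \<in> box_n n u" and y: "y \<in> box_n n u" and th: "0 \<le> \<theta>" "\<theta> \<le> 1"
    and xth: "\<forall>i<n. x i \<le> \<theta> * u i" and fnn: "\<forall>w\<in>box_n n u. f w \<ge> 0"
  shows "f (\<lambda>i. max (x i) (y i)) \<ge> (1 - \<theta>) * f y"
proof -
  define z where "z = (\<lambda>i. max (x i) (y i))"
  have zbox: "z \<in> box_n n u" using x y unfolding z_def box_n_def by auto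
  consider "\<theta> = 1" | "\<theta> = 0" | "0 < \<theta>" "\<theta> < 1" using th by linarith
  then show ?thesis
  proof cases
    case 1 then show ?thesis using fnn zbox unfolding z_def by simp
  next
    case 2
    have "z = y"
    proof
      fix i show "z i = y i"
      proof (cases "i < n")
        case True
        then have "x i \<le> 0" "0 \<le> y i" using xth 2 y unfolding box_n_def by auto
        then show ?thesis unfolding z_def by simp
      next
        case False then show ?thesis using x y unfolding z_def box_n_def by auto
      qed
    qed
    then show ?thesis using 2 unfolding z_def by simp
  next
    case 3
    define M where "M = 1 / \<theta>"
    have M1: "M \<ge> 1" unfolding M_def using 3 by simp
    define w where "w = (\<lambda>i. y i + M * (z i - y i))"
    have wbox: "w \<in> box_n n u"
      unfolding box_n_def mem_Collect_eq
    proof (intro conjI allI impI)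
      fix i assume i: "i < n"
      have yi: "0 \<le> y i" "y i \<le> u i" "0 \<le> x i" using y x i unfolding box_n_def by auto
      show "0 \<le> w i" unfolding w_def z_def using yi M1 by simp
      show "w i \<le> u i"
      proof (cases "x i \<le> y i")
        case True then show ?thesis unfolding w_def z_def using yi by simp
      next
        case False
        then have "w i = M * x i - (M - 1) * y i" unfolding w_def z_def by (simp add: algebra_simps)
        also have "\<dots> \<le> M * x i" using M1 yi by simp
        also have "\<dots> \<le> M * (\<theta> * u i)" using xth i M1 by (intro mult_left_mono) auto
        also have "\<dots> = u i" unfolding M_def using 3 by simp
        finally show ?thesis .
      qed
    next
      fix i :: nat assume "n \<le> i" then show "w i = 0" using x y unfolding w_def z_def box_n_def by auto
    qed
    have yz: "\<forall>i<n. y i \<le> z i" unfolding z_def by simp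
    have zw: "\<forall>i<n. z i \<le> w i"
    proof (intro allI impI)
      fix i assume "i < n"
      have "0 \<le> (M - 1) * (z i - y i)" using M1 unfolding z_def by simp
      then show "z i \<le> w i" unfolding w_def by (simp add: algebra_simps)
    qed
    define I where "I = inner_n n (g z) (\<lambda>i. z i - y i)"
    have a: "f z - f y \<ge> I" unfolding I_def by (rule grad_bounds(2)[OF DR G y zbox yz])
    have b: "f w - f z \<le> inner_n n (g z) (\<lambda>i. w i - z i)" by (rule grad_bounds(1)[OF DR G zbox wbox zw])
    have "(\<lambda>i. w i - z i) = (\<lambda>i. (M - 1) * (z i - y i))" unfolding w_def by (auto simp: algebra_simps)
    then have c: "inner_n n (g z) (\<lambda>i. w i - z i) = (M - 1) * I" unfolding I_def by (simp add: inner_n_scale)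
    have "f w \<ge> 0" using fnn wbox by blast
    then have "- f z \<le> (M - 1) * (f z - f y)" using a b c M1
      by (smt (verit) mult_left_mono)
    then have "\<theta> * (- f z) \<le> \<theta> * ((M - 1) * (f z - f y))" using 3 by (intro mult_left_mono) auto
    moreover have "\<theta> * (M - 1) = 1 - \<theta>" unfolding M_def using 3 by (simp add: field_simps)
    ultimately have "- \<theta> * f z \<le> (1 - \<theta>) * (f z - f y)" by (simp add: mult.assoc[symmetric])
    then show ?thesis unfolding z_def[symmetric] by (simp add: algebra_simps)
  qed
qed



lemma exp_bound: assumes "K > (0::nat)" shows "exp (-1) \<le> (1 - 1 / real K) ^ (K - 1)"
proof (cases "K = 1")
  case True then show ?thesis by simp
next
  case False
  define m where "m = K - 1"
  have m: "m > 0" "real K = real m + 1" using assms False unfolding m_def by auto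
  have "1 + 1 / real m \<le> exp (1 / real m)" by (rule exp_ge_add_one_self)
  then have "exp (- (1 / real m)) \<le> 1 / (1 + 1 / real m)"
    using m by (simp add: exp_minus divide_simps mult.commute)
  also have "\<dots> = 1 - 1 / real K" using m by (simp add: field_simps)
  finally have e: "exp (- (1 / real m)) \<le> 1 - 1 / real K" .
  have "exp (-1) = exp (- (1 / real m)) ^ m"
    using m exp_of_nat_mult[of m "- (1 / real m)"] by simp
  also have "\<dots> \<le> (1 - 1 / real K) ^ m" by (rule power_mono[OF e]) simp
  finally show ?thesis unfolding m_def .
qed

lemma dist_bound:
  assumes "a \<in> box_n n u" "b \<in> box_n n u"
  shows "dist_n n a b \<le> (\<Sum>i<n. u i)"
proof -
  have "dist_n n a b \<le> (\<Sum>i<n. \<bar>a i - b i\<bar>)" unfolding dist_n_def by (rule L2_set_le_sum_abs)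
  also have "\<dots> \<le> (\<Sum>i<n. u i)"
  proof (rule sum_mono)
    fix i assume "i \<in> {..<n}"
    then have "0 \<le> a i" "a i \<le> u i" "0 \<le> b i" "b i \<le> u i" using assms unfolding box_n_def by auto
    then show "\<bar>a i - b i\<bar> \<le> u i" by linarith
  qed
  finally show ?thesis .
qed

lemma le_diam:
  assumes "P \<subseteq> box_n n u" "a \<in> P" "b \<in> P"
  shows "dist_n n a b \<le> diam_n n P"
proof -
  define S where "S = (\<Sum>i<n. u i)"
  have bd: "dist_n n c d \<le> S" if "c \<in> P" "d \<in> P" for c d
    using dist_bound assms(1) that unfolding S_def by blast
  have b1: "bdd_above ((\<lambda>y. dist_n n c y) ` P)" if "c \<in> P" for c
    using bd that by (auto intro!: bdd_aboveI)
  have b2: "bdd_above ((\<lambda>x. SUP y\<in>P. dist_n n x y) ` P)"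
    using assms bd by (auto intro!: bdd_aboveI cSUP_least)
  have "dist_n n a b \<le> (SUP y\<in>P. dist_n n a y)" using cSUP_upper[OF assms(3) b1[OF assms(2)]] .
  also have "\<dots> \<le> diam_n n P" unfolding diam_n_def using cSUP_upper[OF assms(2) b2] .
  finally show ?thesis .
qed



lemma main:
  assumes u: "\<forall>i<n. u i > 0"
    and G: "has_gradient_on n f g (box_n n u)"
    and fnn: "\<forall>y\<in>box_n n u. f y \<ge> 0"
    and DR: "dr_submodular n u f"
    and Lg: "lipschitz_grad n g (box_n n u) L"
    and Pne: "P \<noteq> {}" and Pbox: "P \<subseteq> box_n n u" and dc: "down_closed_n n P"
    and xs: "xstar \<in> P" and opt: "\<forall>y\<in>P. f y \<le> f xstar"
    and K: "K > 0"
    and run: "nmfw_run n u g P (1 / real K) x t v"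
  shows "f (x K) \<ge> exp (-1) * f xstar - L * (diam_n n P)\<^sup>2 / (2 * real K)"
proof -
  define \<gamma> where "\<gamma> = 1 / real K"
  define D where "D = diam_n n P"
  define Q where "Q = L * D\<^sup>2"
  have \<gamma>0: "0 < \<gamma>" "\<gamma> \<le> 1" using K unfolding \<gamma>_def by auto
  have xsbox: "xstar \<in> box_n n u" using xs Pbox by blast
  have fs0: "f xstar \<ge> 0" using fnn xsbox by blast
  have zP: "(\<lambda>i. 0) \<in> P" using dc xs Pbox unfolding down_closed_n_def box_n_def by auto
  have run0: "x 0 = (\<lambda>i. 0)" "t 0 = 0" using run unfolding nmfw_run_def by auto
  have runk: "v k \<in> P \<and> (\<forall>i<n. v k i \<le> u i - x k i) \<and>
         (\<forall>w\<in>P. (\<forall>i<n. w i \<le> u i - x k i) \<longrightarrow> inner_n n w (g (x k)) \<le> inner_n n (v k) (g (x k)))"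
    "x (Suc k) = (\<lambda>i. x k i + min \<gamma> (1 - t k) * v k i)" "t (Suc k) = t k + min \<gamma> (1 - t k)"
    if "t k < 1" for k
    using run that unfolding nmfw_run_def \<gamma>_def by blast+
  have frac: "real k / real K < 1" "\<gamma> \<le> 1 - real k / real K" if "k < K" for k
  proof -
    have "real k < real K" "real k + 1 \<le> real K" using that by auto
    then show "real k / real K < 1" "\<gamma> \<le> 1 - real k / real K" using K unfolding \<gamma>_def
      by (auto simp: field_simps)
  qed
  have tk: "t k = real k / real K" if "k \<le> K" for k
    using that
  proof (induction k)
    case 0 then show ?case using run0 by simp
  next
    case (Suc k)
    then have "t k = real k / real K" "k < K" by auto
    then have lt: "t k < 1" and m: "min \<gamma> (1 - t k) = \<gamma>" using frac[of k]
      by (auto simp: min_def)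
    show ?case using runk(3)[OF lt] m \<open>t k = _\<close> unfolding \<gamma>_def by (simp add: add_divide_distrib)
  qed
  have step: "t k < 1" "min \<gamma> (1 - t k) = \<gamma>" if "k < K" for k
    using tk[of k] that frac[of k] by (auto simp: min_def)
  have xk: "x (Suc k) = (\<lambda>i. x k i + \<gamma> * v k i)" if "k < K" for k
    using runk(2)[OF step(1)[OF that]] step(2)[OF that] by simp
  have vbox: "v k \<in> box_n n u" "\<forall>i<n. v k i \<le> u i - x k i" if "k < K" for k
    using runk(1)[OF step(1)[OF that]] Pbox by auto
  have inv: "x k \<in> box_n n u \<and> (\<forall>i<n. x k i \<le> (1 - (1 - \<gamma>) ^ k) * u i)" if "k \<le> K" for k
    using that
  proof (induction k)
    case 0 then show ?case using run0 u unfolding box_n_def by (simp add: less_imp_le)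
  next
    case (Suc k)
    then have kK: "k < K" and IH: "x k \<in> box_n n u" "\<forall>i<n. x k i \<le> (1 - (1 - \<gamma>) ^ k) * u i" by auto
    have b: "\<forall>i<n. 0 \<le> x (Suc k) i \<and> x (Suc k) i \<le> (1 - (1 - \<gamma>) ^ Suc k) * u i"
    proof (intro allI impI)
      fix i assume i: "i < n"
      have h: "0 \<le> x k i" "0 \<le> v k i" "v k i \<le> u i - x k i" "x k i \<le> (1 - (1 - \<gamma>) ^ k) * u i"
        using IH vbox[OF kK] i unfolding box_n_def by auto
      have "x (Suc k) i = x k i + \<gamma> * v k i" using xk[OF kK] by simp
      moreover have "0 \<le> x k i + \<gamma> * v k i" using h \<gamma>0 by simp
      moreover have "x k i + \<gamma> * v k i \<le> (1 - \<gamma>) * x k i + \<gamma> * u i"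
        using h \<gamma>0 mult_left_mono[OF h(3), of \<gamma>] by (simp add: algebra_simps)
      moreover have "(1 - \<gamma>) * x k i \<le> (1 - \<gamma>) * ((1 - (1 - \<gamma>) ^ k) * u i)"
        using h \<gamma>0 by (intro mult_left_mono) auto
      ultimately show "0 \<le> x (Suc k) i \<and> x (Suc k) i \<le> (1 - (1 - \<gamma>) ^ Suc k) * u i"
        by (simp add: algebra_simps)
    qed
    have c: "\<forall>i\<ge>n. x (Suc k) i = 0" using IH vbox[OF kK] xk[OF kK] unfolding box_n_def by auto
    have "\<forall>i<n. x (Suc k) i \<le> u i"
    proof (intro allI impI)
      fix i assume i: "i < n"
      have "(1 - (1 - \<gamma>) ^ Suc k) * u i \<le> 1 * u i"
        using u i \<gamma>0 by (intro mult_right_mono) auto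
      then show "x (Suc k) i \<le> u i" using b i by force
    qed
    then show ?case using b c unfolding box_n_def by auto
  qed
  have Qbd: "Q \<ge> 0 \<and> L * (L2_set (v k) {..<n})\<^sup>2 \<le> Q" if "k < K" for k
  proof (cases "n = 0")
    case True
    have "D = 0" unfolding D_def diam_n_def dist_n_def True using Pne by (simp add: cSUP_const)
    then show ?thesis unfolding Q_def True by simp
  next
    case False
    define a where "a = (\<lambda>i::nat. 0::real)"
    define b where "b = (\<lambda>i::nat. if i = 0 then u 0 else (0::real))"
    have ab: "a \<in> box_n n u" "b \<in> box_n n u" using u False unfolding a_def b_def box_n_def by auto
    have "dist_n n a b \<noteq> 0"
      unfolding dist_n_def using L2_set_eq_0_iff[of "{..<n}" "\<lambda>i. a i - b i"] u False
      unfolding a_def b_def by auto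
    then have dpos: "dist_n n a b > 0" unfolding dist_n_def by (simp add: order_le_neq_trans)
    have "0 \<le> dist_n n (g a) (g b)" unfolding dist_n_def by simp
    also have "\<dots> \<le> L * dist_n n a b" using Lg ab unfolding lipschitz_grad_def by blast
    finally have L0: "L \<ge> 0" using dpos by (simp add: zero_le_mult_iff)
    have "L2_set (v k) {..<n} = dist_n n (v k) (\<lambda>i. 0)" unfolding dist_n_def by simp
    also have "\<dots> \<le> D" unfolding D_def using le_diam[OF Pbox runk(1)[OF step(1)[OF that], THEN conjunct1] zP] .
    finally have "(L2_set (v k) {..<n})\<^sup>2 \<le> D\<^sup>2" by (simp add: power_mono)
    then show ?thesis unfolding Q_def using L0 by (simp add: mult_left_mono)
  qed
  have rec: "f (x (Suc k)) \<ge> (1 - \<gamma>) * f (x k) + \<gamma> * ((1 - \<gamma>) ^ k * f xstar) - \<gamma>\<^sup>2 * Q / 2"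
    if kK: "k < K" for k
  proof -
    define X where "X = x k"
    define V where "V = v k"
    define Z where "Z = (\<lambda>i. max (X i) (xstar i))"
    have Xb: "X \<in> box_n n u" and Xth: "\<forall>i<n. X i \<le> (1 - (1 - \<gamma>) ^ k) * u i"
      using inv[of k] kK unfolding X_def by auto
    have Yb: "x (Suc k) \<in> box_n n u" using inv[of "Suc k"] kK by auto
    have Y: "x (Suc k) = (\<lambda>i. X i + \<gamma> * V i)" using xk[OF kK] unfolding X_def V_def .
    have dY: "(\<lambda>i. x (Suc k) i - X i) = (\<lambda>i. \<gamma> * V i)" unfolding Y by simp
    have desc: "f (x (Suc k)) \<ge> f X + inner_n n (g X) (\<lambda>i. x (Suc k) i - X i)
          - L / 2 * (L2_set (\<lambda>i. x (Suc k) i - X i) {..<n})\<^sup>2"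
      by (rule descent[OF G Lg Xb Yb])
    have i1: "inner_n n (g X) (\<lambda>i. x (Suc k) i - X i) = \<gamma> * inner_n n V (g X)"
      unfolding dY inner_n_scale by (simp add: inner_n_sym)
    have "L / 2 * (L2_set (\<lambda>i. x (Suc k) i - X i) {..<n})\<^sup>2 = \<gamma>\<^sup>2 * (L * (L2_set V {..<n})\<^sup>2) / 2"
      unfolding dY L2_scale using \<gamma>0 by (simp add: power_mult_distrib)
    also have "\<dots> \<le> \<gamma>\<^sup>2 * Q / 2" using Qbd[OF kK] unfolding V_def by (simp add: mult_left_mono)
    finally have i2: "L / 2 * (L2_set (\<lambda>i. x (Suc k) i - X i) {..<n})\<^sup>2 \<le> \<gamma>\<^sup>2 * Q / 2" .
    define W where "W = (\<lambda>i. Z i - X i)"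
    have xsb: "\<forall>i<n. 0 \<le> xstar i \<and> xstar i \<le> u i" "\<forall>i\<ge>n. xstar i = 0" using xsbox unfolding box_n_def by auto
    have Xbb: "\<forall>i<n. 0 \<le> X i \<and> X i \<le> u i" "\<forall>i\<ge>n. X i = 0" using Xb unfolding box_n_def by auto
    have WP: "W \<in> P"
      using dc xs xsb Xbb unfolding down_closed_n_def W_def Z_def
      by (smt (verit, ccfv_threshold) max_def)
    have Wu: "\<forall>i<n. W i \<le> u i - X i" using xsb Xbb unfolding W_def Z_def by auto
    have o: "inner_n n W (g X) \<le> inner_n n V (g X)"
      using runk(1)[OF step(1)[OF kK]] WP Wu unfolding V_def X_def by blast
    have Zb: "Z \<in> box_n n u" using xsb Xbb unfolding Z_def box_n_def by auto
    have XZ: "\<forall>i<n. X i \<le> Z i" unfolding Z_def by simp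
    have gb: "f Z - f X \<le> inner_n n W (g X)"
      using grad_bounds(1)[OF DR G Xb Zb XZ] unfolding W_def by (simp add: inner_n_sym)
    have th: "0 \<le> 1 - (1 - \<gamma>) ^ k" "1 - (1 - \<gamma>) ^ k \<le> 1"
      using \<gamma>0 by (auto simp: power_le_one)
    have jb: "f Z \<ge> (1 - (1 - (1 - \<gamma>) ^ k)) * f xstar"
      using join_bound[OF DR G Xb xsbox th Xth] fnn unfolding Z_def by blast
    have "\<gamma> * (f Z - f X) \<le> \<gamma> * inner_n n V (g X)" using gb o \<gamma>0 by simp
    moreover have "\<gamma> * ((1 - \<gamma>) ^ k * f xstar - f X) \<le> \<gamma> * (f Z - f X)" using jb \<gamma>0 by simp
    ultimately show ?thesis using desc i1 i2 unfolding X_def by (simp add: algebra_simps)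
  qed
  have Q0: "Q \<ge> 0" using Qbd[of 0] K by simp
  have ind: "f (x k) \<ge> real k * \<gamma> * (1 - \<gamma>) ^ (k - 1) * f xstar - real k * (\<gamma>\<^sup>2 * Q / 2)" if "k \<le> K" for k
    using that
  proof (induction k)
    case 0 then show ?case using fnn inv[of 0] by simp
  next
    case (Suc k)
    then have kK: "k < K" by simp
    have IH: "f (x k) \<ge> real k * \<gamma> * (1 - \<gamma>) ^ (k - 1) * f xstar - real k * (\<gamma>\<^sup>2 * Q / 2)" using Suc by simp
    have pw: "(1 - \<gamma>) * (real k * (1 - \<gamma>) ^ (k - 1)) = real k * (1 - \<gamma>) ^ k" by (cases k) auto
    have B0: "\<gamma>\<^sup>2 * Q / 2 \<ge> 0" using Q0 by simp
    have "(1 - \<gamma>) * f (x k) \<ge> (1 - \<gamma>) * (real k * \<gamma> * (1 - \<gamma>) ^ (k - 1) * f xstar - real k * (\<gamma>\<^sup>2 * Q / 2))"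
      using IH \<gamma>0 by (intro mult_left_mono) auto
    moreover have "(1 - \<gamma>) * (real k * \<gamma> * (1 - \<gamma>) ^ (k - 1) * f xstar - real k * (\<gamma>\<^sup>2 * Q / 2))
        \<ge> real k * \<gamma> * (1 - \<gamma>) ^ k * f xstar - real k * (\<gamma>\<^sup>2 * Q / 2)"
    proof -
      have "(1 - \<gamma>) * (real k * (\<gamma>\<^sup>2 * Q / 2)) \<le> 1 * (real k * (\<gamma>\<^sup>2 * Q / 2))"
        using B0 \<gamma>0 by (intro mult_right_mono) auto
      moreover have "(1 - \<gamma>) * (real k * \<gamma> * (1 - \<gamma>) ^ (k - 1) * f xstar) = real k * \<gamma> * (1 - \<gamma>) ^ k * f xstar"
      proof -
        have "(1 - \<gamma>) * (real k * \<gamma> * (1 - \<gamma>) ^ (k - 1) * f xstar) = \<gamma> * f xstar * ((1 - \<gamma>) * (real k * (1 - \<gamma>) ^ (k - 1)))"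
          by (simp only: mult_ac)
        also have "\<dots> = real k * \<gamma> * (1 - \<gamma>) ^ k * f xstar" unfolding pw by (simp only: mult_ac)
        finally show ?thesis .
      qed
      moreover have "(1 - \<gamma>) * (real k * \<gamma> * (1 - \<gamma>) ^ (k - 1) * f xstar - real k * (\<gamma>\<^sup>2 * Q / 2))
         = (1 - \<gamma>) * (real k * \<gamma> * (1 - \<gamma>) ^ (k - 1) * f xstar) - (1 - \<gamma>) * (real k * (\<gamma>\<^sup>2 * Q / 2))"
        by (rule right_diff_distrib)
      ultimately show ?thesis by linarith
    qed
    moreover have "real (Suc k) * \<gamma> * (1 - \<gamma>) ^ (Suc k - 1) * f xstar = real k * \<gamma> * (1 - \<gamma>) ^ k * f xstar + \<gamma> * ((1 - \<gamma>) ^ k * f xstar)"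
      by (simp add: algebra_simps)
    moreover have "real (Suc k) * (\<gamma>\<^sup>2 * Q / 2) = real k * (\<gamma>\<^sup>2 * Q / 2) + \<gamma>\<^sup>2 * Q / 2"
      by (simp add: algebra_simps)
    ultimately show ?case using rec[OF kK] by linarith
  qed
  have "f (x K) \<ge> real K * \<gamma> * (1 - \<gamma>) ^ (K - 1) * f xstar - real K * (\<gamma>\<^sup>2 * Q / 2)" using ind by simp
  moreover have "real K * \<gamma> = 1" using K unfolding \<gamma>_def by simp
  moreover have "real K * (\<gamma>\<^sup>2 * Q / 2) = L * (diam_n n P)\<^sup>2 / (2 * real K)"
    using K unfolding \<gamma>_def Q_def D_def by (simp add: power2_eq_square field_simps)
  moreover have "exp (-1) * f xstar \<le> (1 - \<gamma>) ^ (K - 1) * f xstar"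
    using exp_bound[OF K] fs0 unfolding \<gamma>_def by (simp add: mult_right_mono)
  ultimately show ?thesis by (simp add: mult.assoc)
qed


theorem corollary1:
  shows "\<exists>C::real. C \<ge> 0 \<and>
    (\<forall>(n::nat) (u::nat \<Rightarrow> real) (f::(nat \<Rightarrow> real) \<Rightarrow> real) g (L::real) P xstar
        (K::nat) x t v.
       (\<forall>i<n. u i > 0) \<and>
       has_gradient_on n f g (box_n n u) \<and>
       (\<forall>y\<in>box_n n u. f y \<ge> 0) \<and>
       dr_submodular n u f \<and>
       lipschitz_grad n g (box_n n u) L \<and>
       P \<noteq> {} \<and> P \<subseteq> box_n n u \<and> compact P \<and> convex_n P \<and> down_closed_n n P \<and>
       xstar \<in> P \<and> (\<forall>y\<in>P. f y \<le> f xstar) \<and>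
       K > 0 \<and>
       nmfw_run n u g P (1 / real K) x t v
     \<longrightarrow> f (x K) \<ge> exp (-1) * f xstar - L * (diam_n n P)\<^sup>2 / (2 * real K)
                   - C / (real K)\<^sup>2 * f xstar)"
proof (intro exI[of _ 0] conjI allI impI)
  fix n u f g L P xstar K x t v
  assume H: "(\<forall>i<n. u i > 0) \<and>
       has_gradient_on n f g (box_n n u) \<and>
       (\<forall>y\<in>box_n n u. f y \<ge> 0) \<and>
       dr_submodular n u f \<and>
       lipschitz_grad n g (box_n n u) L \<and>
       P \<noteq> {} \<and> P \<subseteq> box_n n u \<and> compact P \<and> convex_n P \<and> down_closed_n n P \<and>
       xstar \<in> P \<and> (\<forall>y\<in>P. f y \<le> f (xstar :: nat \<Rightarrow> real)) \<and>
       K > 0 \<and>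
       nmfw_run n u g P (1 / real K) x t v"
  then have "f (x K) \<ge> exp (-1) * f xstar - L * (diam_n n P)\<^sup>2 / (2 * real K)"
    using main[where n=n and u=u and f=f and g=g and L=L and P=P and xstar=xstar and K=K and x=x and t=t and v=v]
    by blast
  then show "f (x K) \<ge> exp (-1) * f xstar - L * (diam_n n P)\<^sup>2 / (2 * real K) - 0 / (real K)\<^sup>2 * f xstar"
    by simp
qed simp

end
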